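(* Consider the linear system $$\frac{d\boldsymbol{x}(t)}{dt} = \mathbf{A}\boldsymbol{x}(t) + \mathbf{B}_p\boldsymbol{p}(t) + \mathbf{B}_d\boldsymbol{d}(t),\qquad t\in\mathcal{T}=[0,t_f],$$ with $\boldsymbol{x}\in\mathbb{R}^{N_x}$, $\boldsymbol{p}\in\mathbb{R}^{N_p}_{+}$, where $\mathbf{A}$ has non-positive diagonal and non-negative off-diagonal entries and $\mathbf{B}_p\ge 0$ entrywise, with a given disturbance $\boldsymbol{d}$ and initial state $\boldsymbol{x}_0$. Fix bounds $\boldsymbol{0}\le\boldsymbol{p}_{\min}\le\boldsymbol{p}_{\max}$ and $\boldsymbol{x}_{\min}\le\boldsymbol{x}_{\max}$ (componentwise). For $t\in\mathcal{T}$ define matrices $\boldsymbol{\alpha}(t),\boldsymbol{\beta}(t)\in\mathbb{R}^{N_x\times N_p}$ by $$\alpha_{i,j}(t)=\max_{0\le\tau\le t}\big(e^{\mathbf{A}(t-\tau)}\mathbf{B}_p\big)_{i,j},\qquad \beta_{i,j}(t)=\min_{0\le\tau\le t}\big(e^{\mathbf{A}(t-\tau)}\mathbf{B}_p\big)_{i,j}.$$ Let $\boldsymbol{p}_+$ and $\boldsymbol{p}_-$ be feasible power trajectories (satisfying $\boldsymbol{p}_{\min}\le\boldsymbol{p}_\pm(t)\le\boldsymbol{p}_{\max}$ and, with the same $\boldsymbol{x}_0$ and $\boldsymbol{d}$, states satisfying $\boldsymbol{x}_{\min}\le\boldsymbol{x}_\pm(t)\le\boldsymbol{x}_{\max}$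 for all $t$), and set $$\boldsymbol{b}_{\pm}(t)=\int_0^t e^{\mathbf{A}(t-\tau)}\mathbf{B}_p\,\boldsymbol{p}_\pm(\tau)\,d\tau.$$ Let $\boldsymbol{p}_a$ satisfy $\boldsymbol{p}_{\min}\le\boldsymbol{p}_a(t)\le\boldsymbol{p}_{\max}$ for all $t$ and, for all $t\in\mathcal{T}$, $$\boldsymbol{\alpha}(t)\int_0^t\boldsymbol{p}_a(\tau)\,d\tau\le\boldsymbol{b}_+(t),\qquad \boldsymbol{\beta}(t)\int_0^t\boldsymbol{p}_a(\tau)\,d\tau\ge\boldsymbol{b}_-(t)$$ (componentwise). Then the state $\boldsymbol{x}_a$ produced by $\boldsymbol{p}_a$ (same $\boldsymbol{x}_0$, $\boldsymbol{d}$) satisfies $\boldsymbol{x}_{\min}\le\boldsymbol{x}_a(t)\le\boldsymbol{x}_{\max}$ for all $t\in\mathcal{T}$.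
   Context: Integrals of vectors are componentwise; vector inequalities are componentwise. States are given by $\boldsymbol{x}(t)=e^{\mathbf{A}t}\boldsymbol{x}_0+\int_0^t e^{\mathbf{A}(t-\tau)}(\mathbf{B}_d\boldsymbol{d}(\tau)+\mathbf{B}_p\boldsymbol{p}(\tau))\,d\tau$. A matrix with non-negative off-diagonal entries is called Metzler. *)

theory Defs
  imports "HOL-Analysis.Analysis"
begin

primrec mat_pow :: "real^'n^'n \<Rightarrow> nat \<Rightarrow> real^'n^'n" where
  "mat_pow A 0 = mat 1"
| "mat_pow A (Suc k) = A ** mat_pow A k"

definition mat_exp :: "real^'n^'n \<Rightarrow> real^'n^'n" where
  "mat_exp A = (\<Sum>k. (1 / fact k) *\<^sub>R mat_pow A k)"

definition metzler_nonpos_diag :: "real^'n^'n \<Rightarrow> bool" where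
  "metzler_nonpos_diag A \<longleftrightarrow> (\<forall>i. A $ i $ i \<le> 0) \<and> (\<forall>i j. i \<noteq> j \<longrightarrow> A $ i $ j \<ge> 0)"

definition state ::
  "real^'n^'n \<Rightarrow> real^'d^'n \<Rightarrow> real^'p^'n \<Rightarrow> real^'n \<Rightarrow> (real \<Rightarrow> real^'d) \<Rightarrow> (real \<Rightarrow> real^'p) \<Rightarrow> real \<Rightarrow> real^'n"
  where
  "state A Bd Bp x0 d p t =
     mat_exp (t *\<^sub>R A) *v x0
     + integral {0..t} (\<lambda>\<tau>. mat_exp ((t - \<tau>) *\<^sub>R A) *v (Bd *v d \<tau> + Bp *v p \<tau>))"

definition alpha_mat :: "real^'n^'n \<Rightarrow> real^'p^'n \<Rightarrow> real \<Rightarrow> real^'p^'n" where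
  "alpha_mat A Bp t = (\<chi> i j. Sup ((\<lambda>\<tau>. (mat_exp ((t - \<tau>) *\<^sub>R A) ** Bp) $ i $ j) ` {0..t}))"

definition beta_mat :: "real^'n^'n \<Rightarrow> real^'p^'n \<Rightarrow> real \<Rightarrow> real^'p^'n" where
  "beta_mat A Bp t = (\<chi> i j. Inf ((\<lambda>\<tau>. (mat_exp ((t - \<tau>) *\<^sub>R A) ** Bp) $ i $ j) ` {0..t}))"

definition bp_int :: "real^'n^'n \<Rightarrow> real^'p^'n \<Rightarrow> (real \<Rightarrow> real^'p) \<Rightarrow> real \<Rightarrow> real^'n" where
  "bp_int A Bp p t = integral {0..t} (\<lambda>\<tau>. mat_exp ((t - \<tau>) *\<^sub>R A) ** Bp *v p \<tau>)"

end

theory Submission imports Defs begin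

lemma mat_scaleR_left: "((c::real) *\<^sub>R X) ** Y = c *\<^sub>R (X ** (Y::real^'a^'b))"
  by (simp add: matrix_matrix_mult_def vec_eq_iff sum_distrib_left algebra_simps)
lemma mat_scaleR_right: "X ** ((c::real) *\<^sub>R Y) = c *\<^sub>R (X ** (Y::real^'a^'b))"
  by (simp add: matrix_matrix_mult_def vec_eq_iff sum_distrib_left algebra_simps)

lemma mat_pow_scaleR: "mat_pow (s *\<^sub>R A) n = (s ^ n) *\<^sub>R mat_pow (A::real^'n^'n) n"
  by (induction n) (simp_all add: mat_scaleR_left mat_scaleR_right)

lemma mat_pow_bound:
  "\<bar>mat_pow (A::real^'n^'n) n $ i $ k\<bar> \<le> (\<Sum>i\<in>UNIV. \<Sum>j\<in>UNIV. \<bar>A $ i $ j\<bar>) ^ n"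
proof (induction n arbitrary: i k)
  case 0
  then show ?case by (simp add: mat_def)
next
  case (Suc n)
  let ?a = "\<Sum>i\<in>UNIV. \<Sum>j\<in>UNIV. \<bar>A $ i $ j\<bar>"
  have "\<bar>mat_pow A (Suc n) $ i $ k\<bar> = \<bar>\<Sum>j\<in>UNIV. A $ i $ j * mat_pow A n $ j $ k\<bar>"
    by (simp add: matrix_matrix_mult_def)
  also have "\<dots> \<le> (\<Sum>j\<in>UNIV. \<bar>A $ i $ j\<bar> * ?a ^ n)"
    by (rule order_trans[OF sum_abs]) (auto intro!: sum_mono mult_left_mono Suc simp: abs_mult)
  also have "\<dots> = (\<Sum>j\<in>UNIV. \<bar>A $ i $ j\<bar>) * ?a ^ n"
    by (simp add: sum_distrib_right)
  also have "\<dots> \<le> ?a * ?a ^ n"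
    using member_le_sum[where f="\<lambda>i. \<Sum>j\<in>UNIV. \<bar>A $ i $ j\<bar>", of i UNIV]
    by (intro mult_right_mono) (auto intro!: sum_nonneg zero_le_power)
  finally show ?case by simp
qed

lemma mat_exp_component:
  "mat_exp (s *\<^sub>R (A::real^'n^'n)) $ i $ k = (\<Sum>n. (mat_pow A n $ i $ k / fact n) * s ^ n)"
proof -
  let ?a = "\<Sum>i\<in>UNIV. \<Sum>j\<in>UNIV. \<bar>A $ i $ j\<bar>"
  define f where "f n = (1 / fact n) *\<^sub>R mat_pow (s *\<^sub>R A) n" for n
  have fc: "f n $ i $ k = (mat_pow A n $ i $ k / fact n) * s ^ n" for n i k
    by (simp add: f_def mat_pow_scaleR)
  have summ: "summable (\<lambda>n. (mat_pow A n $ i $ k / fact n) * s ^ n)" for i k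
  proof (rule summable_comparison_test_ev[OF _ summable_exp[of "?a * \<bar>s\<bar>"]])
    show "\<forall>\<^sub>F n in sequentially. norm (mat_pow A n $ i $ k / fact n * s ^ n) \<le> inverse (fact n) * (?a * \<bar>s\<bar>) ^ n"
    proof (rule always_eventually, rule allI)
      fix n
      have "norm (mat_pow A n $ i $ k / fact n * s ^ n) = \<bar>mat_pow A n $ i $ k\<bar> * \<bar>s\<bar> ^ n / fact n"
        by (simp add: abs_mult power_abs)
      also have "\<dots> \<le> ?a ^ n * \<bar>s\<bar> ^ n / fact n"
        by (intro divide_right_mono mult_right_mono mat_pow_bound) auto
      finally show "norm (mat_pow A n $ i $ k / fact n * s ^ n) \<le> inverse (fact n) * (?a * \<bar>s\<bar>) ^ n"
        by (simp add: power_mult_distrib divide_inverse mult.commute)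
    qed
  qed
  have "f sums (\<chi> i k. \<Sum>n. (mat_pow A n $ i $ k / fact n) * s ^ n)"
    unfolding sums_def
    by (intro vec_tendstoI) (simp only: vec_lambda_beta sum_component fc, rule summable_LIMSEQ[OF summ])
  then have "mat_exp (s *\<^sub>R A) = (\<chi> i k. \<Sum>n. (mat_pow A n $ i $ k / fact n) * s ^ n)"
    unfolding mat_exp_def f_def by (rule sums_unique[symmetric])
  then show ?thesis by simp
qed

lemma mat_exp_cont: "continuous_on UNIV (\<lambda>s. mat_exp (s *\<^sub>R (A::real^'n^'n)) $ i $ k)"
proof -
  let ?a = "\<Sum>i\<in>UNIV. \<Sum>j\<in>UNIV. \<bar>A $ i $ j\<bar>"
  have summ: "summable (\<lambda>n. (mat_pow A n $ i $ k / fact n) * y ^ n)" for y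
  proof (rule summable_comparison_test_ev[OF _ summable_exp[of "?a * \<bar>y\<bar>"]])
    show "\<forall>\<^sub>F n in sequentially. norm (mat_pow A n $ i $ k / fact n * y ^ n) \<le> inverse (fact n) * (?a * \<bar>y\<bar>) ^ n"
    proof (rule always_eventually, rule allI)
      fix n
      have "norm (mat_pow A n $ i $ k / fact n * y ^ n) = \<bar>mat_pow A n $ i $ k\<bar> * \<bar>y\<bar> ^ n / fact n"
        by (simp add: abs_mult power_abs)
      also have "\<dots> \<le> ?a ^ n * \<bar>y\<bar> ^ n / fact n"
        by (intro divide_right_mono mult_right_mono mat_pow_bound) auto
      finally show "norm (mat_pow A n $ i $ k / fact n * y ^ n) \<le> inverse (fact n) * (?a * \<bar>y\<bar>) ^ n"
        by (simp add: power_mult_distrib divide_inverse mult.commute)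
    qed
  qed
  show ?thesis
    unfolding mat_exp_component
    by (intro continuous_at_imp_continuous_on ballI isCont_powser_converges_everywhere summ)
qed


lemma vec_comp_integrable: fixes f :: "'a::euclidean_space \<Rightarrow> real^'m" shows "f integrable_on S \<Longrightarrow> (\<lambda>x. f x $ j) integrable_on S"
  using integrable_component[of f S "axis j 1"] by (simp add: inner_axis)

lemma mexp_cont: "continuous_on {a..b} (\<lambda>\<tau>. (mat_exp ((t - \<tau>) *\<^sub>R (A::real^'n^'n)) ** (B::real^'p^'n)) $ i $ j)"
proof -
  have c: "continuous_on {a..b} (\<lambda>\<tau>. mat_exp ((t - \<tau>) *\<^sub>R A) $ i $ k)" for k
  proof -
    have "continuous_on {a..b} (\<lambda>\<tau>. t - \<tau>)" by (intro continuous_intros)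
    from continuous_on_compose[OF this continuous_on_subset[OF mat_exp_cont[of A i k] subset_UNIV]]
    show ?thesis by (simp add: o_def)
  qed
  show ?thesis
    unfolding matrix_matrix_mult_def
    by (simp, intro continuous_on_sum continuous_on_mult_right c)
qed

lemma prod_int:
  fixes W :: "real \<Rightarrow> real^'p^'n"
  assumes W: "\<And>i j. continuous_on {a..b} (\<lambda>\<tau>. W \<tau> $ i $ j)"
    and q: "q absolutely_integrable_on {a..b}"
  shows "(\<lambda>\<tau>. W \<tau> $ i $ j * q \<tau> $ j) absolutely_integrable_on {a..b}"
proof (rule absolutely_integrable_bounded_measurable_product_real)
  show "(\<lambda>\<tau>. W \<tau> $ i $ j) \<in> borel_measurable (lebesgue_on {a..b})"
    by (rule continuous_imp_measurable_on_sets_lebesgue[OF W]) simp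
  show "bounded ((\<lambda>\<tau>. W \<tau> $ i $ j) ` {a..b})"
    by (rule compact_imp_bounded, rule compact_continuous_image[OF W compact_Icc])
  show "(\<lambda>\<tau>. q \<tau> $ j) absolutely_integrable_on {a..b}"
    using absolutely_integrable_component[OF q, of "axis j 1"] by (simp add: inner_axis)
  show "{a..b} \<in> sets lebesgue" by simp
qed

lemma mv_int:
  fixes W :: "real \<Rightarrow> real^'p^'n"
  assumes W: "\<And>i j. continuous_on {a..b} (\<lambda>\<tau>. W \<tau> $ i $ j)"
    and q: "q absolutely_integrable_on {a..b}"
  shows "(\<lambda>\<tau>. W \<tau> *v q \<tau>) integrable_on {a..b}"
proof -
  have "(\<lambda>\<tau>. W \<tau> *v q \<tau>) absolutely_integrable_on {a..b}"
  proof (subst absolutely_integrable_on_iff_component, simp, intro allI)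
    fix i
    show "(\<lambda>\<tau>. (W \<tau> *v q \<tau>) $ i) absolutely_integrable_on {a..b}"
      unfolding matrix_vector_mult_def
      by (simp, intro absolutely_integrable_sum prod_int[OF W q]) auto
  qed
  then show ?thesis by (rule set_lebesgue_integral_eq_integral(1))
qed


lemma state_split:
  fixes A :: "real^'n^'n" and Bp :: "real^'p^'n" and Bd :: "real^'d^'n"
  assumes d: "d absolutely_integrable_on {0..t}" and p: "p absolutely_integrable_on {0..t}"
  shows "state A Bd Bp x0 d p t = mat_exp (t *\<^sub>R A) *v x0
     + integral {0..t} (\<lambda>\<tau>. mat_exp ((t - \<tau>) *\<^sub>R A) ** Bd *v d \<tau>) + bp_int A Bp p t"
proof -
  have i1: "(\<lambda>\<tau>. mat_exp ((t - \<tau>) *\<^sub>R A) ** Bd *v d \<tau>) integrable_on {0..t}"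
    by (rule mv_int[OF _ d]) (rule mexp_cont)
  have i2: "(\<lambda>\<tau>. mat_exp ((t - \<tau>) *\<^sub>R A) ** Bp *v p \<tau>) integrable_on {0..t}"
    by (rule mv_int[OF _ p]) (rule mexp_cont)
  have e: "(\<lambda>\<tau>. mat_exp ((t - \<tau>) *\<^sub>R A) *v (Bd *v d \<tau> + Bp *v p \<tau>))
     = (\<lambda>\<tau>. mat_exp ((t - \<tau>) *\<^sub>R A) ** Bd *v d \<tau> + mat_exp ((t - \<tau>) *\<^sub>R A) ** Bp *v p \<tau>)"
    by (simp only: matrix_vector_right_distrib matrix_vector_mul_assoc)
  show ?thesis
    unfolding state_def bp_int_def e integral_add[OF i1 i2] by (rule add.assoc[symmetric])
qed

lemma bp_int_comp:
  fixes A :: "real^'n^'n" and Bp :: "real^'p^'n"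
  assumes p: "p absolutely_integrable_on {0..t}"
  shows "bp_int A Bp p t $ i = (\<Sum>j\<in>UNIV. integral {0..t} (\<lambda>\<tau>. (mat_exp ((t - \<tau>) *\<^sub>R A) ** Bp) $ i $ j * p \<tau> $ j))"
proof -
  have i2: "(\<lambda>\<tau>. mat_exp ((t - \<tau>) *\<^sub>R A) ** Bp *v p \<tau>) integrable_on {0..t}"
    by (rule mv_int[OF _ p]) (rule mexp_cont)
  have "bp_int A Bp p t $ i = integral {0..t} (\<lambda>\<tau>. (mat_exp ((t - \<tau>) *\<^sub>R A) ** Bp *v p \<tau>) $ i)"
    unfolding bp_int_def by (rule integral_component_eq_cart[OF i2, symmetric])
  also have "\<dots> = integral {0..t} (\<lambda>\<tau>. \<Sum>j\<in>UNIV. (mat_exp ((t - \<tau>) *\<^sub>R A) ** Bp) $ i $ j * p \<tau> $ j)"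
    by (simp only: matrix_vector_mult_def vec_lambda_beta)
  also have "\<dots> = (\<Sum>j\<in>UNIV. integral {0..t} (\<lambda>\<tau>. (mat_exp ((t - \<tau>) *\<^sub>R A) ** Bp) $ i $ j * p \<tau> $ j))"
    by (rule Henstock_Kurzweil_Integration.integral_sum[OF finite_class.finite_UNIV],
        rule set_lebesgue_integral_eq_integral(1), rule prod_int[OF _ p], rule mexp_cont)
  finally show ?thesis .
qed


lemma absint_p:
  fixes p :: "real \<Rightarrow> real^'p"
  assumes "p integrable_on {0..tf}" "\<forall>\<tau>\<in>{0..tf}. 0 \<le> p \<tau>" "t \<le> tf"
  shows "p absolutely_integrable_on {0..t}"
proof (subst absolutely_integrable_on_iff_component, simp, intro allI)
  fix j
  have "p integrable_on {0..t}"
    using assms by (intro integrable_on_subinterval[OF assms(1)]) auto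
  then show "(\<lambda>x. p x $ j) absolutely_integrable_on {0..t}"
    using assms by (intro nonnegative_absolutely_integrable_1 vec_comp_integrable) (auto simp: less_eq_vec_def)
qed

lemma comp_le:
  fixes A :: "real^'n^'n" and Bp :: "real^'p^'n" and p :: "real \<Rightarrow> real^'p"
  assumes p: "p absolutely_integrable_on {0..t}" and pos: "\<forall>\<tau>\<in>{0..t}. 0 \<le> p \<tau>"
  shows "(beta_mat A Bp t *v integral {0..t} p) $ i \<le> bp_int A Bp p t $ i
       \<and> bp_int A Bp p t $ i \<le> (alpha_mat A Bp t *v integral {0..t} p) $ i"
proof -
  let ?M = "\<lambda>j \<tau>. (mat_exp ((t - \<tau>) *\<^sub>R A) ** Bp) $ i $ j"
  have pint: "p integrable_on {0..t}" using p by (rule set_lebesgue_integral_eq_integral(1))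
  have pj: "(\<lambda>\<tau>. p \<tau> $ j) integrable_on {0..t}" for j by (rule vec_comp_integrable[OF pint])
  have cj: "(\<lambda>\<tau>. c * p \<tau> $ j) integrable_on {0..t}" for c j
    using integrable_on_cmult_left[OF pj, of c] by simp
  have pjpos: "\<tau> \<in> {0..t} \<Longrightarrow> 0 \<le> p \<tau> $ j" for \<tau> j using pos by (auto simp: less_eq_vec_def)
  have Mint: "(\<lambda>\<tau>. ?M j \<tau> * p \<tau> $ j) integrable_on {0..t}" for j
    by (rule set_lebesgue_integral_eq_integral(1), rule prod_int[OF _ p], rule mexp_cont)
  have bdd: "bounded (?M j ` {0..t})" for j
    by (rule compact_imp_bounded, rule compact_continuous_image[OF mexp_cont]) auto
  have al: "alpha_mat A Bp t $ i $ j = Sup (?M j ` {0..t})" for j by (simp add: alpha_mat_def)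
  have be: "beta_mat A Bp t $ i $ j = Inf (?M j ` {0..t})" for j by (simp add: beta_mat_def)
  have intc: "integral {0..t} p $ j = integral {0..t} (\<lambda>\<tau>. p \<tau> $ j)" for j
    by (rule integral_component_eq_cart[OF pint, symmetric])
  have up: "integral {0..t} (\<lambda>\<tau>. ?M j \<tau> * p \<tau> $ j) \<le> alpha_mat A Bp t $ i $ j * integral {0..t} p $ j" for j
  proof -
    have "integral {0..t} (\<lambda>\<tau>. ?M j \<tau> * p \<tau> $ j) \<le> integral {0..t} (\<lambda>\<tau>. alpha_mat A Bp t $ i $ j * p \<tau> $ j)"
    proof (rule integral_le[OF Mint cj])
      fix \<tau> assume t: "\<tau> \<in> {0..t}"
      show "?M j \<tau> * p \<tau> $ j \<le> alpha_mat A Bp t $ i $ j * p \<tau> $ j"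
        unfolding al using t pjpos[OF t] bounded_imp_bdd_above[OF bdd]
        by (intro mult_right_mono cSUP_upper) auto
    qed
    then show ?thesis by (simp add: intc)
  qed
  have lo: "beta_mat A Bp t $ i $ j * integral {0..t} p $ j \<le> integral {0..t} (\<lambda>\<tau>. ?M j \<tau> * p \<tau> $ j)" for j
  proof -
    have "integral {0..t} (\<lambda>\<tau>. beta_mat A Bp t $ i $ j * p \<tau> $ j) \<le> integral {0..t} (\<lambda>\<tau>. ?M j \<tau> * p \<tau> $ j)"
    proof (rule integral_le[OF cj Mint])
      fix \<tau> assume t: "\<tau> \<in> {0..t}"
      show "beta_mat A Bp t $ i $ j * p \<tau> $ j \<le> ?M j \<tau> * p \<tau> $ j"
        unfolding be using t pjpos[OF t] bounded_imp_bdd_below[OF bdd]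
        by (intro mult_right_mono cINF_lower) auto
    qed
    then show ?thesis by (simp add: intc)
  qed
  show ?thesis
    unfolding bp_int_comp[OF p] by (simp add: matrix_vector_mult_def sum_mono up lo)
qed

theorem theorem2:
  fixes A :: "real^'n^'n" and Bp :: "real^'p^'n" and Bd :: "real^'d^'n"
    and x0 xmin xmax :: "real^'n" and pmin pmax :: "real^'p"
    and d :: "real \<Rightarrow> real^'d" and pplus pminus pa :: "real \<Rightarrow> real^'p"
    and tf :: real
  assumes hA: "metzler_nonpos_diag A"
    and hBp: "\<forall>i j. Bp $ i $ j \<ge> 0"
    and hp: "0 \<le> pmin" "pmin \<le> pmax"
    and hx: "xmin \<le> xmax"
    and hd: "d absolutely_integrable_on {0..tf}"
    and hpplus_int: "pplus integrable_on {0..tf}"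
    and hpminus_int: "pminus integrable_on {0..tf}"
    and hpa_int: "pa integrable_on {0..tf}"
    and hpplus: "\<forall>t\<in>{0..tf}. pmin \<le> pplus t \<and> pplus t \<le> pmax"
    and hpminus: "\<forall>t\<in>{0..tf}. pmin \<le> pminus t \<and> pminus t \<le> pmax"
    and hxplus: "\<forall>t\<in>{0..tf}. xmin \<le> state A Bd Bp x0 d pplus t \<and> state A Bd Bp x0 d pplus t \<le> xmax"
    and hxminus: "\<forall>t\<in>{0..tf}. xmin \<le> state A Bd Bp x0 d pminus t \<and> state A Bd Bp x0 d pminus t \<le> xmax"
    and hpa: "\<forall>t\<in>{0..tf}. pmin \<le> pa t \<and> pa t \<le> pmax"
    and halpha: "\<forall>t\<in>{0..tf}. alpha_mat A Bp t *v integral {0..t} pa \<le> bp_int A Bp pplus t"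
    and hbeta: "\<forall>t\<in>{0..tf}. beta_mat A Bp t *v integral {0..t} pa \<ge> bp_int A Bp pminus t"
  shows "\<forall>t\<in>{0..tf}. xmin \<le> state A Bd Bp x0 d pa t \<and> state A Bd Bp x0 d pa t \<le> xmax"
proof
  fix t assume t: "t \<in> {0..tf}"
  have pos: "\<forall>\<tau>\<in>{0..tf}. 0 \<le> p \<tau>" if "\<forall>\<tau>\<in>{0..tf}. pmin \<le> p \<tau> \<and> p \<tau> \<le> pmax" for p :: "real \<Rightarrow> real^'p"
    using that hp(1) by (meson order_trans)
  have pa_pos: "\<forall>\<tau>\<in>{0..tf}. 0 \<le> pa \<tau>" by (rule pos[OF hpa])
  have pa_pos': "\<forall>\<tau>\<in>{0..t}. 0 \<le> pa \<tau>" using pa_pos t by auto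
  have ia: "pa absolutely_integrable_on {0..t}" using absint_p[OF hpa_int pa_pos] t by auto
  have ip: "pplus absolutely_integrable_on {0..t}" using absint_p[OF hpplus_int pos[OF hpplus]] t by auto
  have im: "pminus absolutely_integrable_on {0..t}" using absint_p[OF hpminus_int pos[OF hpminus]] t by auto
  have id: "d absolutely_integrable_on {0..t}"
    using t by (intro absolutely_integrable_on_subinterval[OF hd]) auto
  note sa = state_split[OF id ia, of A Bd Bp x0]
  note sp = state_split[OF id ip, of A Bd Bp x0]
  note sm = state_split[OF id im, of A Bd Bp x0]
  have le1: "bp_int A Bp pa t $ i \<le> bp_int A Bp pplus t $ i" for i
  proof -
    have "(alpha_mat A Bp t *v integral {0..t} pa) $ i \<le> bp_int A Bp pplus t $ i"
      using halpha t unfolding less_eq_vec_def by blast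
    then show ?thesis using comp_le[OF ia pa_pos', of A Bp i] by linarith
  qed
  have le2: "bp_int A Bp pminus t $ i \<le> bp_int A Bp pa t $ i" for i
  proof -
    have "bp_int A Bp pminus t $ i \<le> (beta_mat A Bp t *v integral {0..t} pa) $ i"
      using hbeta t unfolding less_eq_vec_def by blast
    then show ?thesis using comp_le[OF ia pa_pos', of A Bp i] by linarith
  qed
  have "state A Bd Bp x0 d pa t \<le> state A Bd Bp x0 d pplus t"
    unfolding sa sp less_eq_vec_def using le1 by simp
  moreover have "state A Bd Bp x0 d pminus t \<le> state A Bd Bp x0 d pa t"
    unfolding sa sm less_eq_vec_def using le2 by simp
  ultimately show "xmin \<le> state A Bd Bp x0 d pa t \<and> state A Bd Bp x0 d pa t \<le> xmax"
    using hxplus hxminus t by (blast intro: order_trans)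
qed

end
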